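(* Let $m\ge2$ and let $\mathcal{D}^b=(\Omega^b,\mathcal{B}^b)$ be the Boolean quadruple system of order $2^m$, and let $\mathcal{C}^b$ be the set of collinear triples of $\mathcal{D}^b$. Then $(\Omega^b,\mathcal{C}^b)$ is a regular two-graph and $\mathcal{D}^b$ satisfies property $(\triangle)$. Furthermore, for $\infty\in\Omega^b$, $\mathcal{L}_\infty(\mathcal{D}^b)\cong(\mathbb{F}_2)^m$ and $\pi_\infty(\mathcal{D}^b)$ is trivial.
   Context: The Boolean quadruple system of order $2^m$ has point set $\Omega^b=\mathbb{F}_2^m$ and line set $\mathcal{B}^b$ consisting of all $4$-subsets $\{v_1,v_2,v_3,v_4\}$ with $\sum v_i=0$; it is a supersimple $2$-$(2^m,4,2^{m-1}-1)$ design. A collinear triple is a $3$-subset contained in a line. $(\Omega,\mathcal{C})$ is a regular two-graph if it is a $2$-$(n,3,\mu)$ design and every $4$-subset contains $0,2$ or $4$ members of $\mathcal{C}$. Property $(\triangle)$: if $B_1,B_2\in\mathcal{B}$ with $|B_1\cap B_2|=2$ then $B_1\triangle B_2\in\mathcal{B}$. For distinct $a,b$ with lines $\{a,b,a_i,b_i\}$ through them, $[a,b]:=(a,b)\prod_i(a_i,b_i)$, $[a,a]:=1$; products left to right, $[a_0,\dots,a_k]:=[a_0,a_1]\cdots[a_{k-1},a_k]$; $\mathcal{L}_\infty$ = move sequences starting at $\infty$, $\pi_\infty$ = move sequences starting and ending at $\infty$. *)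

theory Defs
  imports "HOL-Analysis.Finite_Cartesian_Product" "HOL-Library.Z2" "HOL-Algebra.Group"
begin

text \<open>Points of the Boolean quadruple system of order 2^m: the vector space F_2^m,
  rendered as bit ^ 'n with CARD('n) = m (bit = the field F_2 of HOL-Library.Z2).\<close>

definition boolean_lines :: "(bit ^ 'n) set set" where
  "boolean_lines = {S. card S = 4 \<and> (\<Sum>v\<in>S. v) = 0}"

definition collinear_triples :: "'a set \<Rightarrow> 'a set set \<Rightarrow> 'a set set" where
  "collinear_triples \<Omega> \<B> = {T. T \<subseteq> \<Omega> \<and> card T = 3 \<and> (\<exists>L\<in>\<B>. T \<subseteq> L)}"

definition design_2_3 :: "'a set \<Rightarrow> 'a set set \<Rightarrow> nat \<Rightarrow> bool" where
  "design_2_3 \<Omega> \<C> \<mu> \<longleftrightarrow>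
     (\<forall>T\<in>\<C>. T \<subseteq> \<Omega> \<and> card T = 3) \<and>
     (\<forall>x\<in>\<Omega>. \<forall>y\<in>\<Omega>. x \<noteq> y \<longrightarrow> card {T\<in>\<C>. {x, y} \<subseteq> T} = \<mu>)"

definition regular_two_graph :: "'a set \<Rightarrow> 'a set set \<Rightarrow> bool" where
  "regular_two_graph \<Omega> \<C> \<longleftrightarrow>
     (\<exists>\<mu>. design_2_3 \<Omega> \<C> \<mu>) \<and>
     (\<forall>F. F \<subseteq> \<Omega> \<longrightarrow> card F = 4 \<longrightarrow> card {T\<in>\<C>. T \<subseteq> F} \<in> {0, 2, 4})"

definition property_triangle :: "'a set set \<Rightarrow> bool" where
  "property_triangle \<B> \<longleftrightarrow>
     (\<forall>B1\<in>\<B>. \<forall>B2\<in>\<B>. card (B1 \<inter> B2) = 2 \<longrightarrow> (B1 - B2) \<union> (B2 - B1) \<in> \<B>)"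

text \<open>The move [a,b] = (a,b) prod_i (a_i,b_i), where {a,b,a_i,b_i} runs over the lines
  through a and b; [a,a] = 1. In a supersimple design these transpositions are disjoint,
  so the product is the permutation below.\<close>
definition move :: "'a set set \<Rightarrow> 'a \<Rightarrow> 'a \<Rightarrow> 'a \<Rightarrow> 'a" where
  "move \<B> a b x =
     (if a = b then x
      else if x = a then b
      else if x = b then a
      else if (\<exists>y. {a, b, x, y} \<in> \<B>) then (THE y. {a, b, x, y} \<in> \<B>)
      else x)"

text \<open>[a_0,...,a_k] = [a_0,a_1][a_1,a_2]...[a_(k-1),a_k], products left to right
  (the left factor is applied first); [a_0] = 1.\<close>
fun move_seq :: "'a set set \<Rightarrow> 'a list \<Rightarrow> 'a \<Rightarrow> 'a" where
  "move_seq \<B> [] = id"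
| "move_seq \<B> [a] = id"
| "move_seq \<B> (a # b # rest) = move_seq \<B> (b # rest) \<circ> move \<B> a b"

definition L_inf :: "'a set \<Rightarrow> 'a set set \<Rightarrow> 'a \<Rightarrow> ('a \<Rightarrow> 'a) set" where
  "L_inf \<Omega> \<B> pinf = {move_seq \<B> (pinf # as) | as. set as \<subseteq> \<Omega>}"

definition pi_inf :: "'a set \<Rightarrow> 'a set set \<Rightarrow> 'a \<Rightarrow> ('a \<Rightarrow> 'a) set" where
  "pi_inf \<Omega> \<B> pinf = {move_seq \<B> (pinf # as) | as. set as \<subseteq> \<Omega> \<and> last (pinf # as) = pinf}"

definition L_inf_struct :: "'a set \<Rightarrow> 'a set set \<Rightarrow> 'a \<Rightarrow> ('a \<Rightarrow> 'a) monoid" where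
  "L_inf_struct \<Omega> \<B> pinf = \<lparr>carrier = L_inf \<Omega> \<B> pinf, mult = (\<lambda>\<sigma> \<tau>. \<tau> \<circ> \<sigma>), one = id\<rparr>"

definition F2_vec_group :: "(bit ^ 'n) monoid" where
  "F2_vec_group = \<lparr>carrier = UNIV, mult = (+), one = 0\<rparr>"

end

theory Submission
  imports Defs
begin



lemma vv0: "(v::bit ^ 'n) + v = 0"
proof -
  have "\<And>x::bit. x + x = 0" by (metis add_bit_eq_xor xor_self_eq)
  thus ?thesis by (simp add: vec_eq_iff)
qed

lemma two_v [simp]: "2 * (v::bit ^ 'n) = 0"
  by (metis mult_2 vv0)

lemma vvw [simp]: "(v::bit ^ 'n) + (v + w) = w"
  by (simp add: add.assoc[symmetric] vv0)

lemma neg_v: "- (v::bit ^ 'n) = v"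
  using vv0[of v] by (metis add.inverse_unique)

lemma sum4:
  assumes "card {a,b,x,y::'a::comm_monoid_add} = 4"
  shows "a \<noteq> b \<and> a \<noteq> x \<and> a \<noteq> y \<and> b \<noteq> x \<and> b \<noteq> y \<and> x \<noteq> y \<and> sum id {a,b,x,y} = a+b+x+y"
proof -
  have d: "a \<noteq> b \<and> a \<noteq> x \<and> a \<noteq> y \<and> b \<noteq> x \<and> b \<noteq> y \<and> x \<noteq> y"
  proof (rule ccontr)
    assume "\<not> ?thesis"
    hence "card {a,b,x,y} \<le> 3"
      by (auto simp: card_insert_if)
    thus False using assms by simp
  qed
  thus ?thesis by (simp add: add.assoc)
qed

lemma line_iff:
  assumes "a \<noteq> b" "x \<noteq> a" "x \<noteq> b"
  shows "{a,b,x,y} \<in> (boolean_lines :: (bit^'n) set set) \<longleftrightarrow> y = x + a + b"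
proof
  assume "{a,b,x,y} \<in> (boolean_lines :: (bit^'n) set set)"
  hence c: "card {a,b,x,y} = 4" and s: "(\<Sum>v\<in>{a,b,x,y}. v) = 0" by (auto simp: boolean_lines_def)
  from sum4[OF c] s have "a+b+x+y = 0" by simp
  hence "y = -(a+b+x)" by (simp add: add_eq_0_iff2 eq_neg_iff_add_eq_0 add.commute)
  thus "y = x + a + b" by (simp add: neg_v add_ac)
next
  assume y: "y = x + a + b"
  have "y \<noteq> a" proof assume "y = a" hence "x + b + (a + a) = a + a" using y by (simp add: add_ac)
    hence "x + b = 0" by (simp add: vv0) hence "x = -b" by (simp add: add_eq_0_iff2)
    thus False using assms by (simp add: neg_v) qed
  moreover have "y \<noteq> b" proof assume "y = b" hence "x + a + (b + b) = b + b" using y by (simp add: add_ac)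
    hence "x + a = 0" by (simp add: vv0) hence "x = -a" by (simp add: add_eq_0_iff2)
    thus False using assms by (simp add: neg_v) qed
  moreover have "y \<noteq> x" proof assume "y = x" hence "a + b + (x + x) = x + x" using y by (simp add: add_ac)
    hence "a + b = 0" by (simp add: vv0) hence "a = -b" by (simp add: add_eq_0_iff2)
    thus False using assms by (simp add: neg_v) qed
  ultimately have c: "card {a,b,x,y} = 4" using assms by (auto simp: card_insert_if)
  have "a+b+x+y = (x+a+b) + (x+a+b)" using y by (simp add: add_ac)
  also have "\<dots> = 0" by (rule vv0)
  finally show "{a,b,x,y} \<in> (boolean_lines :: (bit^'n) set set)"
    using sum4[OF c] c by (simp add: boolean_lines_def)
qed

lemma move_eq: "move (boolean_lines :: (bit^'n) set set) a b x = x + a + b"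
proof -
  consider "a = b" | "a \<noteq> b" "x = a" | "a \<noteq> b" "x \<noteq> a" "x = b" | "a \<noteq> b" "x \<noteq> a" "x \<noteq> b" by blast
  thus ?thesis
  proof cases
    case 1 thus ?thesis by (simp add: move_def vv0 add.assoc)
  next
    case 2 thus ?thesis by (simp add: move_def vv0)
  next
    case 3 thus ?thesis by (simp add: move_def vv0 add.assoc add.commute)
  next
    case 4
    have "(THE y. {a, b, x, y} \<in> (boolean_lines :: (bit^'n) set set)) = x + a + b"
      using line_iff[OF 4] by simp
    thus ?thesis using 4 line_iff[OF 4] by (auto simp: move_def)
  qed
qed



lemma move_seq_eq:
  "move_seq (boolean_lines :: (bit^'n) set set) (a # as) = (\<lambda>x. x + a + last (a # as))"
proof (induction as arbitrary: a)
  case Nil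
  show ?case by (simp add: vv0 add.assoc)
next
  case (Cons b rest)
  have "move_seq (boolean_lines :: (bit^'n) set set) (a # b # rest)
     = move_seq boolean_lines (b # rest) \<circ> move boolean_lines a b" by simp
  also have "\<dots> = (\<lambda>x. (x + a + b) + b + last (b # rest))"
    using Cons by (simp add: move_eq[abs_def] comp_def)
  also have "\<dots> = (\<lambda>x. x + a + last (a # b # rest))"
    by (rule ext) (simp add: add.assoc vv0[of b, unfolded] add.left_commute[of b])
  finally show ?case .
qed

lemma L_inf_eq: "L_inf UNIV (boolean_lines :: (bit^'n) set set) p = {(\<lambda>x. x + v) | v. True}"
proof -
  have "\<exists>as. (\<lambda>x. x + v) = move_seq (boolean_lines :: (bit^'n) set set) (p # as)" for v
  proof -
    have "(\<lambda>x. x + v) = move_seq (boolean_lines :: (bit^'n) set set) (p # [p + v])"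
      unfolding move_seq_eq by (rule ext) (simp add: add.assoc vvw)
    thus ?thesis by blast
  qed
  moreover have "\<exists>v. move_seq (boolean_lines :: (bit^'n) set set) (p # as) = (\<lambda>x. x + v)" for as
    unfolding move_seq_eq add.assoc by (rule exI) (rule refl)
  ultimately show ?thesis unfolding L_inf_def by blast
qed

lemma pi_inf_eq: "pi_inf UNIV (boolean_lines :: (bit^'n) set set) p = {id}"
proof -
  have "move_seq (boolean_lines :: (bit^'n) set set) (p # as) = id" if "last (p#as) = p" for as
    using that by (auto simp: move_seq_eq add.assoc vv0)
  moreover have "move_seq (boolean_lines :: (bit^'n) set set) (p # []) = id" by simp
  ultimately show ?thesis unfolding pi_inf_def by fastforce
qed



lemma all_collinear:
  "collinear_triples UNIV (boolean_lines :: (bit^'n) set set) = {T. card T = 3}"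
proof -
  have "\<exists>L\<in>(boolean_lines :: (bit^'n) set set). T \<subseteq> L" if "card T = 3" for T :: "(bit^'n) set"
  proof -
    from that obtain a b c where T: "T = {a,b,c}" "a\<noteq>b" "b\<noteq>c" "a\<noteq>c" by (auto simp: card_3_iff)
    have "{a,b,c,c+a+b} \<in> (boolean_lines :: (bit^'n) set set)" using line_iff[of a b c "c+a+b"] T(2,3,4) T(4)[symmetric] by simp
    thus ?thesis using T(1) by (intro bexI[of _ "{a,b,c,c+a+b}"]) auto
  qed
  thus ?thesis unfolding collinear_triples_def by auto
qed

lemma two_graph:
  "regular_two_graph UNIV (collinear_triples UNIV (boolean_lines :: (bit^'n) set set))"
proof -
  let ?C = "{T :: (bit^'n) set. card T = 3}"
  have des: "design_2_3 UNIV ?C (CARD(bit^'n) - 2)"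
    unfolding design_2_3_def
  proof (intro conjI ballI impI)
    fix x y :: "bit^'n" assume xy: "x \<noteq> y"
    have eq: "{T\<in>?C. {x, y} \<subseteq> T} = (\<lambda>z. {x,y,z}) ` (UNIV - {x,y})"
    proof (intro equalityI subsetI)
      fix T assume "T \<in> {T\<in>?C. {x, y} \<subseteq> T}"
      hence T: "card T = 3" "x \<in> T" "y \<in> T" by auto
      have fT: "finite T" using T(1) by (metis card_ge_0_finite zero_less_numeral)
      have "card (T - {x,y}) = 1" using T xy fT by (simp add: card_Diff_subset)
      then obtain z where z: "T - {x,y} = {z}" by (auto simp: card_Suc_eq)
      hence "T = {x,y,z}" using T by blast
      moreover have "z \<notin> {x,y}" using z by blast
      ultimately show "T \<in> (\<lambda>z. {x,y,z}) ` (UNIV - {x,y})" by blast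
    next
      fix T assume "T \<in> (\<lambda>z. {x,y,z}) ` (UNIV - {x,y})"
      thus "T \<in> {T\<in>?C. {x, y} \<subseteq> T}" using xy by auto
    qed
    have inj: "inj_on (\<lambda>z. {x,y,z}) (UNIV - {x,y})"
      by (rule inj_onI) (auto simp: insert_eq_iff)
    have "card {T\<in>?C. {x, y} \<subseteq> T} = card (UNIV - {x,y} :: (bit^'n) set)"
      by (simp only: eq card_image[OF inj])
    also have "\<dots> = CARD(bit^'n) - 2" using xy by (simp add: card_Diff_subset)
    finally show "card {T\<in>?C. {x, y} \<subseteq> T} = CARD(bit^'n) - 2" .
  qed auto
  have "card {T\<in>?C. T \<subseteq> F} \<in> {0,2,4}" if "card F = 4" for F :: "(bit^'n) set"
  proof -
    have "finite F" using that by (metis card_ge_0_finite zero_less_numeral)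
    have "{T\<in>?C. T \<subseteq> F} = {T. T \<subseteq> F \<and> card T = 3}" by auto
    hence "card {T\<in>?C. T \<subseteq> F} = 4 choose 3" using n_subsets[OF \<open>finite F\<close>, of 3] that by simp
    thus ?thesis by (simp add: numeral_eq_Suc)
  qed
  thus ?thesis using des unfolding regular_two_graph_def all_collinear by blast
qed



lemma triangle: "property_triangle (boolean_lines :: (bit^'n) set set)"
  unfolding property_triangle_def
proof (intro ballI impI)
  fix B1 B2 :: "(bit^'n) set"
  assume b1: "B1 \<in> boolean_lines" and b2: "B2 \<in> boolean_lines" and c: "card (B1 \<inter> B2) = 2"
  have c1: "card B1 = 4" and c2: "card B2 = 4"
    and s1: "sum id B1 = 0" and s2: "sum id B2 = 0"
    using b1 b2 by (auto simp: boolean_lines_def)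
  have f1: "finite B1" and f2: "finite B2" using c1 c2 by (metis card_ge_0_finite zero_less_numeral)+
  have d1: "card (B1 - B2) = 2" using c c1 f1 by (simp add: card_Diff_subset_Int)
  have d2: "card (B2 - B1) = 2" using c c2 f2 by (simp add: card_Diff_subset_Int Int_commute)
  have disj: "(B1 - B2) \<inter> (B2 - B1) = {}" by blast
  have cd: "card ((B1 - B2) \<union> (B2 - B1)) = 4"
    using d1 d2 f1 f2 disj by (simp add: card_Un_disjoint)
  let ?I = "sum id (B1 \<inter> B2)"
  have e1: "sum id (B1 - B2) + ?I = 0" using s1 sum.Int_Diff[OF f1, of id B2] by (simp add: add.commute)
  have e2: "sum id (B2 - B1) + ?I = 0" using s2 sum.Int_Diff[OF f2, of id B1] by (simp add: add.commute Int_commute)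
  have x1: "sum id (B1 - B2) = ?I" using e1 by (simp add: add_eq_0_iff2 neg_v)
  have x2: "sum id (B2 - B1) = ?I" using e2 by (simp add: add_eq_0_iff2 neg_v)
  have "sum id ((B1 - B2) \<union> (B2 - B1)) = 0"
    using f1 f2 disj x1 x2 vv0 by (simp add: sum.union_disjoint)
  thus "(B1 - B2) \<union> (B2 - B1) \<in> boolean_lines" using cd by (simp add: boolean_lines_def)
qed


lemma carG: "carrier (L_inf_struct UNIV (boolean_lines :: (bit ^ 'n) set set) p) = {(\<lambda>x. x + v) | v::bit^'n. True}"
  by (simp add: L_inf_struct_def L_inf_eq)

lemma mulG: "x \<otimes>\<^bsub>L_inf_struct UNIV (boolean_lines :: (bit ^ 'n) set set) p\<^esub> y = y \<circ> x"
  by (simp add: L_inf_struct_def)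

lemma oneG: "\<one>\<^bsub>L_inf_struct UNIV (boolean_lines :: (bit ^ 'n) set set) p\<^esub> = id"
  by (simp add: L_inf_struct_def)



lemma grpG: "group (L_inf_struct UNIV (boolean_lines :: (bit ^ 'n) set set) p)"
proof (rule groupI)
  fix x y assume "x \<in> carrier (L_inf_struct UNIV (boolean_lines :: (bit ^ 'n) set set) p)"
    "y \<in> carrier (L_inf_struct UNIV (boolean_lines :: (bit ^ 'n) set set) p)"
  then obtain v w where "x = (\<lambda>x. x + v)" "y = (\<lambda>x. x + w)" unfolding carG by blast
  hence "y \<circ> x = (\<lambda>z. z + (v + w))" by (simp add: comp_def add.assoc)
  thus "x \<otimes>\<^bsub>L_inf_struct UNIV (boolean_lines :: (bit ^ 'n) set set) p\<^esub> y \<in> carrier (L_inf_struct UNIV (boolean_lines :: (bit ^ 'n) set set) p)"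
    unfolding carG mulG by blast
next
  have "id = (\<lambda>x::bit^'n. x + 0)" by (simp add: id_def)
  thus "\<one>\<^bsub>L_inf_struct UNIV (boolean_lines :: (bit ^ 'n) set set) p\<^esub> \<in> carrier (L_inf_struct UNIV (boolean_lines :: (bit ^ 'n) set set) p)"
    unfolding carG oneG by blast
next
  fix x y z
  show "x \<otimes>\<^bsub>L_inf_struct UNIV (boolean_lines :: (bit ^ 'n) set set) p\<^esub> y \<otimes>\<^bsub>L_inf_struct UNIV (boolean_lines :: (bit ^ 'n) set set) p\<^esub> z
       = x \<otimes>\<^bsub>L_inf_struct UNIV (boolean_lines :: (bit ^ 'n) set set) p\<^esub> (y \<otimes>\<^bsub>L_inf_struct UNIV (boolean_lines :: (bit ^ 'n) set set) p\<^esub> z)"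
    unfolding mulG by (rule comp_assoc[symmetric])
next
  fix x
  show "\<one>\<^bsub>L_inf_struct UNIV (boolean_lines :: (bit ^ 'n) set set) p\<^esub> \<otimes>\<^bsub>L_inf_struct UNIV (boolean_lines :: (bit ^ 'n) set set) p\<^esub> x = x"
    unfolding mulG oneG by simp
next
  fix x assume xc: "x \<in> carrier (L_inf_struct UNIV (boolean_lines :: (bit ^ 'n) set set) p)"
  then obtain v where xv: "x = (\<lambda>x. x + v)" unfolding carG by blast
  have "x \<circ> x = id" unfolding xv by (rule ext) (simp add: add.assoc vv0)
  thus "\<exists>y\<in>carrier (L_inf_struct UNIV (boolean_lines :: (bit ^ 'n) set set) p). y \<otimes>\<^bsub>L_inf_struct UNIV (boolean_lines :: (bit ^ 'n) set set) p\<^esub> x = \<one>\<^bsub>L_inf_struct UNIV (boolean_lines :: (bit ^ 'n) set set) p\<^esub>"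
    using xc unfolding mulG oneG by blast
qed



lemma isoG: "(\<lambda>\<sigma>. \<sigma> 0) \<in> iso (L_inf_struct UNIV (boolean_lines :: (bit ^ 'n) set set) p) (F2_vec_group :: (bit ^ 'n) monoid)"
proof (rule isoI)
  show "(\<lambda>\<sigma>. \<sigma> 0) \<in> hom (L_inf_struct UNIV (boolean_lines :: (bit ^ 'n) set set) p) F2_vec_group"
  proof (rule homI)
    fix x show "x 0 \<in> carrier F2_vec_group" by (simp add: F2_vec_group_def)
  next
    fix x y assume "x \<in> carrier (L_inf_struct UNIV (boolean_lines :: (bit ^ 'n) set set) p)"
      "y \<in> carrier (L_inf_struct UNIV (boolean_lines :: (bit ^ 'n) set set) p)"
    then obtain v w where "x = (\<lambda>x. x + v)" "y = (\<lambda>x. x + w)" unfolding carG by blast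
    thus "(x \<otimes>\<^bsub>L_inf_struct UNIV (boolean_lines :: (bit ^ 'n) set set) p\<^esub> y) 0 = x 0 \<otimes>\<^bsub>F2_vec_group\<^esub> y 0"
      unfolding mulG by (simp add: F2_vec_group_def)
  qed
next
  show "bij_betw (\<lambda>\<sigma>. \<sigma> 0) (carrier (L_inf_struct UNIV (boolean_lines :: (bit ^ 'n) set set) p)) (carrier (F2_vec_group :: (bit ^ 'n) monoid))"
    unfolding bij_betw_def carG
  proof
    show "inj_on (\<lambda>\<sigma>. \<sigma> 0) {(\<lambda>x. x + v) | v::bit^'n. True}"
      by (rule inj_onI) auto
    have "v \<in> (\<lambda>\<sigma>. \<sigma> 0) ` {(\<lambda>x. x + v) | v::bit^'n. True}" for v :: "bit^'n"
      by (rule image_eqI[of _ _ "\<lambda>x. x + v"]) auto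
    thus "(\<lambda>\<sigma>. \<sigma> 0) ` {(\<lambda>x. x + v) | v::bit^'n. True} = carrier (F2_vec_group :: (bit ^ 'n) monoid)"
      by (auto simp: F2_vec_group_def)
  qed
qed



theorem lemma2p8:
  fixes pinf :: "bit ^ 'n"
  assumes "CARD('n) \<ge> 2"
  shows "regular_two_graph UNIV (collinear_triples UNIV (boolean_lines :: (bit ^ 'n) set set))
    \<and> property_triangle (boolean_lines :: (bit ^ 'n) set set)
    \<and> group (L_inf_struct UNIV boolean_lines pinf)
    \<and> L_inf_struct UNIV boolean_lines pinf \<cong> (F2_vec_group :: (bit ^ 'n) monoid)
    \<and> pi_inf UNIV boolean_lines pinf = {id}"
  using grpG[of pinf] is_isoI[OF isoG[of pinf]] two_graph triangle pi_inf_eq by blast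



end
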